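(* Let $X$ be a real Banach space with $\dim X\ge 2$. If $S_P(X)<\frac{3-\sqrt5}{4}$, then $X$ has uniform normal structure.
   Context: For a real Banach space $X$ with unit sphere $S_X$, the P-angle constant is $S_P(X)=\sup\left\{\frac{\|x+y\|^2+\|x-y\|^2-4}{2\|x+y\|\,\|x-y\|}: x,y\in S_X,\ x\neq \pm y\right\}$. For a bounded closed convex $A\subseteq X$, $\operatorname{diam}A=\sup\{\|x-y\|:x,y\in A\}$ and the Chebyshev radius is $r(A)=\inf_{y\in A}\sup_{x\in A}\|x-y\|$. $X$ has uniform normal structure if $\inf\{\operatorname{diam}A/r(A)\}>1$, the infimum over all bounded closed convex subsets $A$ of $X$ with $\operatorname{diam}A>0$. *)

theory Defs
  imports "HOL-Analysis.Analysis"
begin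

definition P_angle_const :: "'a::real_normed_vector itself \<Rightarrow> real" where
  "P_angle_const (_::'a itself) =
     Sup {(norm (x + y)^2 + norm (x - y)^2 - 4) / (2 * norm (x + y) * norm (x - y)) | x y :: 'a.
            norm x = 1 \<and> norm y = 1 \<and> x \<noteq> y \<and> x \<noteq> - y}"

definition cheb_radius :: "'a::real_normed_vector set \<Rightarrow> real" where
  "cheb_radius A = (INF y\<in>A. SUP x\<in>A. norm (x - y))"

definition uniform_normal_structure :: "'a::real_normed_vector itself \<Rightarrow> bool" where
  "uniform_normal_structure (_::'a itself) \<longleftrightarrow>
     Inf {diameter A / cheb_radius A | A :: 'a set.
            bounded A \<and> closed A \<and> convex A \<and> diameter A > 0} > 1"

end

theory Submission
  imports Defs
begin

lemma sp_val_le1: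
  fixes x y :: "'a::real_normed_vector"
  assumes "norm x = 1" "norm y = 1" "x \<noteq> y" "x \<noteq> - y"
  shows "(norm (x + y)^2 + norm (x - y)^2 - 4) / (2 * norm (x + y) * norm (x - y)) \<le> 1"
proof -
  have a2: "norm (x+y) \<le> 2" using norm_triangle_ineq[of x y] assms by simp
  have b2: "norm (x-y) \<le> 2" using norm_triangle_ineq4[of x y] assms by simp
  have ap: "norm (x+y) > 0" using assms(4) by (simp add: add_eq_0_iff2)
  have bp: "norm (x-y) > 0" using assms(3) by simp
  have "(norm (x+y) - norm (x-y))^2 \<le> 4"
  proof -
    have "\<bar>norm (x+y) - norm (x-y)\<bar> \<le> 2" using a2 b2 ap bp by linarith
    hence "\<bar>norm (x+y) - norm (x-y)\<bar>^2 \<le> 2^2" by (rule power_mono) simp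
    thus ?thesis by simp
  qed
  hence "norm (x + y)^2 + norm (x - y)^2 - 4 \<le> 2 * norm (x + y) * norm (x - y)"
    by (simp add: power2_diff)
  thus ?thesis using ap bp by simp
qed

lemma sp_val_le:
  fixes x y :: "'a::real_normed_vector"
  assumes "norm x = 1" "norm y = 1" "x \<noteq> y" "x \<noteq> - y"
  shows "(norm (x + y)^2 + norm (x - y)^2 - 4) / (2 * norm (x + y) * norm (x - y))
          \<le> P_angle_const TYPE('a)"
  unfolding P_angle_const_def
proof (rule cSup_upper)
  show "(norm (x + y)^2 + norm (x - y)^2 - 4) / (2 * norm (x + y) * norm (x - y))
     \<in> {(norm (x + y)^2 + norm (x - y)^2 - 4) / (2 * norm (x + y) * norm (x - y)) | x y :: 'a.
            norm x = 1 \<and> norm y = 1 \<and> x \<noteq> y \<and> x \<noteq> - y}"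
    using assms by blast
  show "bdd_above {(norm (x + y)^2 + norm (x - y)^2 - 4) / (2 * norm (x + y) * norm (x - y)) | x y :: 'a.
            norm x = 1 \<and> norm y = 1 \<and> x \<noteq> y \<and> x \<noteq> - y}"
    by (rule bdd_aboveI[where M=1]) (auto intro: sp_val_le1)
qed

lemma key_ball:
  fixes u v :: "'a::real_normed_vector"
  defines "t \<equiv> max (P_angle_const TYPE('a)) 0"
  defines "g \<equiv> 1 - 4 * t"
  assumes g: "g > 0"
    and u: "norm u \<le> 1" and v: "norm v \<le> 1" and uv: "norm (u - v) \<ge> 1 - g/2"
  shows "norm (u + v) \<le> 2 - g/100"
proof (rule ccontr)
  define \<eta> where "\<eta> = g/100"
  assume "\<not> ?thesis"
  hence p: "norm (u+v) > 2 - \<eta>" unfolding \<eta>_def by simp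
  have t0: "t \<ge> 0" and g1: "g \<le> 1" unfolding g_def t_def by auto
  have \<eta>0: "\<eta> > 0" and \<eta>s: "\<eta> \<le> 1/100" using g g1 unfolding \<eta>_def by auto
  define \<alpha> where "\<alpha> = norm u"
  define \<beta> where "\<beta> = norm v"
  have "norm (u+v) \<le> \<alpha> + \<beta>" unfolding \<alpha>_def \<beta>_def by (rule norm_triangle_ineq)
  hence \<alpha>1: "\<alpha> > 1 - \<eta>" and \<beta>1: "\<beta> > 1 - \<eta>" using p u v \<alpha>_def \<beta>_def by linarith+
  have \<alpha>le: "\<alpha> \<le> 1" "\<beta> \<le> 1" using u v \<alpha>_def \<beta>_def by auto
  define x where "x = (1/\<alpha>) *\<^sub>R u"
  define y where "y = (1/\<beta>) *\<^sub>R v"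
  have nx: "norm x = 1" unfolding x_def \<alpha>_def using \<alpha>1 \<eta>s \<alpha>_def by auto
  have ny: "norm y = 1" unfolding y_def \<beta>_def using \<beta>1 \<eta>s \<beta>_def by auto
  have xu: "norm (x - u) = 1 - \<alpha>"
  proof -
    have "x - u = (1/\<alpha> - 1) *\<^sub>R u" unfolding x_def by (simp add: algebra_simps)
    hence "norm (x - u) = \<bar>1/\<alpha> - 1\<bar> * \<alpha>" by (simp add: \<alpha>_def)
    also have "\<dots> = (1/\<alpha> - 1) * \<alpha>" using \<alpha>1 \<alpha>le \<eta>s by (simp add: field_simps)
    also have "\<dots> = 1 - \<alpha>" using \<alpha>1 \<eta>s by (simp add: field_simps)
    finally show ?thesis .
  qed
  have yv: "norm (y - v) = 1 - \<beta>"
  proof -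
    have "y - v = (1/\<beta> - 1) *\<^sub>R v" unfolding y_def by (simp add: algebra_simps)
    hence "norm (y - v) = \<bar>1/\<beta> - 1\<bar> * \<beta>" by (simp add: \<beta>_def)
    also have "\<dots> = (1/\<beta> - 1) * \<beta>" using \<beta>1 \<alpha>le \<eta>s by (simp add: field_simps)
    also have "\<dots> = 1 - \<beta>" using \<beta>1 \<eta>s by (simp add: field_simps)
    finally show ?thesis .
  qed
  define a where "a = norm (x + y)"
  define b where "b = norm (x - y)"
  have "x + y = (u + v) + ((x - u) + (y - v))" by simp
  hence "u + v = (x + y) - ((x - u) + (y - v))" by (simp add: algebra_simps)
  hence "norm (u+v) \<le> a + norm ((x - u) + (y - v))" unfolding a_def
    by (metis norm_triangle_ineq4)
  moreover have "norm ((x - u) + (y - v)) \<le> norm (x-u) + norm (y-v)" by (rule norm_triangle_ineq)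
  ultimately have "norm (u+v) \<le> a + (norm (x-u) + norm (y-v))" by linarith
  hence aL: "a > 2 - 3*\<eta>" using p xu yv \<alpha>1 \<beta>1 by linarith
  have "u - v = (x - y) - ((x - u) - (y - v))" by simp
  hence "norm (u - v) \<le> b + norm ((x - u) - (y - v))" unfolding b_def
    by (metis norm_triangle_ineq4)
  moreover have "norm ((x - u) - (y - v)) \<le> norm (x-u) + norm (y-v)" by (rule norm_triangle_ineq4)
  ultimately have bL: "b \<ge> 1 - g/2 - 2*\<eta>" using uv xu yv \<alpha>1 \<beta>1 by linarith
  have a2: "a \<le> 2" unfolding a_def using norm_triangle_ineq[of x y] nx ny by simp
  have ap: "a > 0" and bp: "b > 0" using aL bL \<eta>s g1 unfolding \<eta>_def by auto
  have xny: "x \<noteq> y" using bp b_def by auto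
  have xnmy: "x \<noteq> - y" using ap a_def by auto
  have "(a^2 + b^2 - 4) / (2 * a * b) \<le> t"
    using sp_val_le[OF nx ny xny xnmy] unfolding a_def b_def t_def by linarith
  hence ineq: "a^2 + b^2 - 4 \<le> 2 * t * a * b" using ap bp by (simp add: divide_le_eq mult.commute mult.left_commute)
  have "a^2 \<ge> 4 - 12 * \<eta>"
  proof -
    have "(2 - 3*\<eta>)^2 \<le> a^2" using aL \<eta>s by (intro power_mono) auto
    thus ?thesis by (simp add: power2_eq_square algebra_simps) (smt (verit) \<eta>0 mult_pos_pos)
  qed
  moreover have "2 * t * a * b \<le> 4 * t * b"
  proof -
    have "(2*t*b) * a \<le> (2*t*b) * 2" using t0 a2 bp by (intro mult_left_mono) auto
    thus ?thesis by (simp add: algebra_simps)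
  qed
  ultimately have A: "b * (b - 4*t) \<le> 12 * \<eta>" using ineq by (simp add: power2_eq_square algebra_simps)
  have B: "(1 - g/2 - 2*\<eta>) * (1 - g/2 - 2*\<eta> - 4*t) \<le> b * (b - 4*t)"
  proof (rule mult_mono)
    have t4: "4*t = 1 - g" unfolding g_def by simp
    show "1 - g/2 - 2*\<eta> \<le> b" by (rule bL)
    show "1 - g/2 - 2*\<eta> - 4*t \<le> b - 4*t" using bL by linarith
    show "0 \<le> b" using bp by simp
    show "0 \<le> 1 - g/2 - 2*\<eta> - 4*t" using t4 g \<eta>_def by simp
  qed
  have t4: "4*t = 1 - g" unfolding g_def by simp
  have C: "(1 - g/2 - 2*\<eta>) * (1 - g/2 - 2*\<eta> - 4*t) = (1 - 13*g/25) * (12*g/25)"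
    unfolding t4 \<eta>_def by (simp add: algebra_simps)
  have "(1 - 13*g/25) * 12 > 3" using g1 by simp
  hence "(1 - 13*g/25) * 12 * (g/25) > 3 * (g/25)" using g by (intro mult_strict_right_mono) auto
  hence "(1 - 13*g/25) * (12*g/25) > 12 * \<eta>" unfolding \<eta>_def by (simp add: algebra_simps)
  thus False using A B C by linarith
qed

lemma ratio_bound:
  fixes A :: "'a::real_normed_vector set"
  assumes c: "0 < c" "c < 1" and e: "0 < e" "e < 1"
    and key: "\<And>u v::'a. norm u \<le> 1 \<Longrightarrow> norm v \<le> 1 \<Longrightarrow> norm (u - v) \<ge> e \<Longrightarrow> norm (u + v) \<le> 2 * c"
    and A: "bounded A" "convex A" "diameter A > 0"
  shows "diameter A / cheb_radius A \<ge> 1 / c"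
proof -
  define d where "d = diameter A"
  have d0: "d > 0" using A d_def by simp
  have Ane: "A \<noteq> {}" using A by auto
  obtain x y where xy: "x \<in> A" "y \<in> A" "dist x y > e * d"
  proof -
    have "e * d > 0" "e * d < d" using d0 e by auto
    thus ?thesis using diameter_bounded(2)[OF A(1)] that d_def by blast
  qed
  define m where "m = (1/2) *\<^sub>R x + (1/2) *\<^sub>R y"
  have mA: "m \<in> A" unfolding m_def using A(2) xy by (intro convexD) auto
  have dbound: "norm (z - w) \<le> d" if "z \<in> A" "w \<in> A" for z w
    using diameter_bounded(1)[OF A(1)] that d_def by (simp add: dist_norm)
  have bdd: "bdd_above ((\<lambda>z. norm (z - w)) ` A)" if "w \<in> A" for w
    using dbound that by (intro bdd_aboveI[where M=d]) auto
  have zm: "norm (z - m) \<le> c * d" if z: "z \<in> A" for z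
  proof -
    define u where "u = (1/d) *\<^sub>R (z - x)"
    define v where "v = (1/d) *\<^sub>R (z - y)"
    have nu: "norm u \<le> 1" unfolding u_def norm_scaleR using dbound[OF z xy(1)] d0 by (simp add: field_simps del: scaleR_right_diff_distrib)
    have nv: "norm v \<le> 1" unfolding v_def norm_scaleR using dbound[OF z xy(2)] d0 by (simp add: field_simps del: scaleR_right_diff_distrib)
    have "u - v = (1/d) *\<^sub>R (y - x)" unfolding u_def v_def by (simp add: algebra_simps)
    hence "norm (u - v) = norm (x - y) / d" using d0 by (simp add: norm_minus_commute)
    also have "\<dots> \<ge> e" using xy(3) d0 by (simp add: dist_norm field_simps)
    finally have "norm (u + v) \<le> 2 * c" using key nu nv by blast
    moreover have "u + v = (2/d) *\<^sub>R (z - m)"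
    proof -
      have 1: "u + v = (1/d) *\<^sub>R ((z - x) + (z - y))" unfolding u_def v_def by (simp only: scaleR_right_distrib)
      have 2: "(z - x) + (z - y) = 2 *\<^sub>R (z - m)" unfolding m_def by (simp add: algebra_simps scaleR_2)
      show ?thesis unfolding 1 2 by simp
    qed
    ultimately have "(2/d) * norm (z - m) \<le> 2 * c" using d0 by simp
    thus ?thesis using d0 by (simp add: field_simps)
  qed
  have r_le: "cheb_radius A \<le> c * d"
  proof -
    have "cheb_radius A \<le> (SUP z\<in>A. norm (z - m))" unfolding cheb_radius_def
    proof (rule cINF_lower[OF _ mA])
      show "bdd_below ((\<lambda>y. SUP x\<in>A. norm (x - y)) ` A)"
        by (rule bdd_belowI[where m=0]) (auto intro: cSUP_upper2[OF bdd _ norm_ge_zero])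
    qed
    also have "\<dots> \<le> c * d" using zm Ane by (intro cSUP_least) auto
    finally show ?thesis .
  qed
  have r_ge: "cheb_radius A \<ge> d / 2" unfolding cheb_radius_def
  proof (rule cINF_greatest[OF Ane])
    fix w assume w: "w \<in> A"
    have "d \<le> 2 * (SUP z\<in>A. norm (z - w))" unfolding d_def
    proof (rule diameter_le)
      show "A \<noteq> {} \<or> 0 \<le> 2 * (SUP z\<in>A. norm (z - w))" using Ane by simp
      fix p q assume pq: "p \<in> A" "q \<in> A"
      have "norm (p - q) \<le> norm (p - w) + norm (q - w)"
        using norm_triangle_ineq4[of "p - w" "q - w"] by simp
      also have "\<dots> \<le> 2 * (SUP z\<in>A. norm (z - w))"
        using cSUP_upper[OF pq(1) bdd[OF w]] cSUP_upper[OF pq(2) bdd[OF w]] by simp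
      finally show "norm (p - q) \<le> 2 * (SUP z\<in>A. norm (z - w))" .
    qed
    thus "d / 2 \<le> (SUP z\<in>A. norm (z - w))" by simp
  qed
  have rp: "cheb_radius A > 0" using r_ge d0 by simp
  have "1 / c = d / (c * d)" using d0 c by simp
  also have "\<dots> \<le> d / cheb_radius A" using r_le rp d0 by (intro divide_left_mono) auto
  finally show ?thesis unfolding d_def .
qed

theorem theorem5p4:
  assumes dim2: "\<exists>x y :: 'a::banach. x \<noteq> y \<and> independent {x, y}"
    and SP: "P_angle_const TYPE('a) < (3 - sqrt 5) / 4"
  shows "uniform_normal_structure TYPE('a)"
proof -
  define t where "t = max (P_angle_const TYPE('a)) 0"
  define g where "g = 1 - 4 * t"
  have "sqrt 5 > 2" by (rule real_less_rsqrt) simp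
  hence g0: "g > 0" using SP unfolding g_def t_def by auto
  have g1: "g \<le> 1" unfolding g_def t_def by auto
  define c where "c = 1 - g/200"
  have c: "0 < c" "c < 1" using g0 g1 c_def by auto
  have e: "0 < 1 - g/2" "1 - g/2 < 1" using g0 g1 by auto
  have key: "norm (u + v) \<le> 2 * c" if "norm u \<le> 1" "norm v \<le> 1" "norm (u - v) \<ge> 1 - g/2"
    for u v :: 'a
  proof -
    have "norm (u + v) \<le> 2 - g/100" using key_ball[of u v] that g0 unfolding g_def t_def by simp
    thus ?thesis unfolding c_def by simp
  qed
  obtain x :: 'a where x: "x \<noteq> 0" using dim2 by (metis dependent_zero insertCI)
  define S where "S = {diameter A / cheb_radius A | A :: 'a set.
            bounded A \<and> closed A \<and> convex A \<and> diameter A > 0}"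
  have "diameter (closed_segment 0 x) > 0"
  proof -
    have "dist 0 x \<le> diameter (closed_segment 0 x)"
      by (rule diameter_bounded_bound) (auto simp: bounded_closed_segment)
    moreover have "norm x > 0" using x by simp
    ultimately show ?thesis by (simp add: dist_norm) (metis less_le_trans zero_less_norm_iff)
  qed
  hence Sne: "S \<noteq> {}" unfolding S_def
    by (auto intro!: exI[where x="closed_segment 0 x"] simp: bounded_closed_segment)
  have "1 / c \<le> Inf S"
    using Sne unfolding S_def
    by (intro cInf_greatest) (auto intro!: ratio_bound[OF c e key])
  moreover have "1 < 1 / c" using c by simp
  ultimately show ?thesis unfolding uniform_normal_structure_def S_def by linarith
qed

end
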